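(* Let $f(\mathbf z)=\sum_{\mathbf k}f_{\mathbf k}\mathbf z^{\mathbf k}$ be a power series in $g$ variables of order of magnitude $(A,\mathbf n)$. Let $u\ge0$ be an integer and $R_u(\mathbf z)=f(\mathbf z)-\sum_{|\mathbf k|_1\le u-1}f_{\mathbf k}\mathbf z^{\mathbf k}$ the remainder of order $u$. Let $0<R<1$. Then for all $\mathbf z\in P(\mathbf 0_g,R)$, $|R_u(\mathbf z)|\le B(u+1)^{(n+1)g}|\mathbf z|_\infty^u$, where $n=|\mathbf n|_\infty$ and $B=\frac{2\,\mathbf n!\,A\,g}{(1-R)^{g+|\mathbf n|_1}}$. Moreover, if $0<\kappa<1$ and $u\ge\max\left(\frac{16(ng)^2}{(\log R)^2},\frac{2(\log\kappa-\log B)}{\log R}\right)$, then $|R_u(\mathbf z)|\le\kappa$ for all $\mathbf z\in P(\mathbf 0_g,R)$.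
   Context: Multi-index notation; $|\mathbf x|_\infty=\max_k|x_k|$, $|\mathbf x|_1=\sum_k|x_k|$, $\mathbf n!=\prod n_m!$; $P(\mathbf 0_g,R)=D(0,R)^g$. A series has order of magnitude $(A,\mathbf n)$, with $A\ge1$ real and $\mathbf n=(n_1,\dots,n_g)$ integers $\ge1$, if $|f_{\mathbf k}|\le A\prod_m(k_m+1)^{n_m}$ for all $\mathbf k\in\mathbb N^g$. *)

theory Defs
  imports "HOL-Analysis.Analysis"
begin

definition mindex :: "nat \<Rightarrow> (nat \<Rightarrow> nat) set" where
  "mindex g = {k. \<forall>i\<ge>g. k i = 0}"

definition monom_g :: "nat \<Rightarrow> (nat \<Rightarrow> nat) \<Rightarrow> (nat \<Rightarrow> complex) \<Rightarrow> complex" where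
  "monom_g g k z = (\<Prod>m<g. z m ^ k m)"

definition order_of_magnitude ::
  "nat \<Rightarrow> ((nat \<Rightarrow> nat) \<Rightarrow> complex) \<Rightarrow> real \<Rightarrow> (nat \<Rightarrow> nat) \<Rightarrow> bool" where
  "order_of_magnitude g f A n \<longleftrightarrow> A \<ge> 1 \<and> (\<forall>m<g. n m \<ge> 1) \<and>
     (\<forall>k\<in>mindex g. norm (f k) \<le> A * (\<Prod>m<g. real (k m + 1) ^ n m))"

definition pseries :: "nat \<Rightarrow> ((nat \<Rightarrow> nat) \<Rightarrow> complex) \<Rightarrow> (nat \<Rightarrow> complex) \<Rightarrow> complex" where
  "pseries g f z = infsum (\<lambda>k. f k * monom_g g k z) (mindex g)"

text \<open>Remainder of order u: f(z) minus the sum over |k|_1 <= u-1 (i.e. |k|_1 < u).\<close>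
definition remainder_u ::
  "nat \<Rightarrow> ((nat \<Rightarrow> nat) \<Rightarrow> complex) \<Rightarrow> nat \<Rightarrow> (nat \<Rightarrow> complex) \<Rightarrow> complex" where
  "remainder_u g f u z = pseries g f z -
     (\<Sum>k\<in>{k\<in>mindex g. (\<Sum>m<g. k m) < u}. f k * monom_g g k z)"

definition polydisc :: "nat \<Rightarrow> real \<Rightarrow> (nat \<Rightarrow> complex) set" where
  "polydisc g R = {z. \<forall>m<g. norm (z m) < R}"

definition supnorm_g :: "nat \<Rightarrow> (nat \<Rightarrow> complex) \<Rightarrow> real" where
  "supnorm_g g z = Max ((\<lambda>m. norm (z m)) ` {..<g})"

end

theory Submission
  imports Defs
begin


definition box :: "nat \<Rightarrow> nat \<Rightarrow> (nat \<Rightarrow> nat) set" where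
  "box g M = {k\<in>mindex g. \<forall>m<g. k m \<le> M}"

lemma box_bij: "bij_betw (\<lambda>e i. if i < g then e i else 0) (PiE {..<g} (\<lambda>_. {..M})) (box g M)"
proof (rule bij_betw_byWitness[where f' = "\<lambda>k. restrict k {..<g}"])
  show "\<forall>a\<in>PiE {..<g} (\<lambda>_. {..M}). restrict (\<lambda>i. if i < g then a i else 0) {..<g} = a"
    by (auto simp: PiE_def extensional_def fun_eq_iff)
  show "\<forall>a'\<in>box g M. (\<lambda>i. if i < g then restrict a' {..<g} i else 0) = a'"
    by (auto simp: box_def mindex_def fun_eq_iff)
  show "(\<lambda>e i. if i < g then e i else 0) ` PiE {..<g} (\<lambda>_. {..M}) \<subseteq> box g M"
    by (auto simp: box_def mindex_def PiE_def Pi_def)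
  show "(\<lambda>k. restrict k {..<g}) ` box g M \<subseteq> PiE {..<g} (\<lambda>_. {..M})"
    by (rule image_subsetI) (simp add: box_def restrict_PiE_iff)
qed

lemma finite_box: "finite (box g M)"
  using bij_betw_finite[OF box_bij] by (simp add: finite_PiE)

lemma box_sum:
  fixes h :: "nat \<Rightarrow> nat \<Rightarrow> real"
  shows "(\<Sum>k\<in>box g M. \<Prod>m<g. h m (k m)) = (\<Prod>m<g. \<Sum>i\<le>M. h m i)"
proof -
  have "(\<Prod>m<g. \<Sum>i\<le>M. h m i) = (\<Sum>e\<in>PiE {..<g} (\<lambda>_. {..M}). \<Prod>m<g. h m (e m))"
    by (rule prod_sum_PiE) auto
  also have "\<dots> = (\<Sum>e\<in>PiE {..<g} (\<lambda>_. {..M}). (\<lambda>k. \<Prod>m<g. h m (k m)) (\<lambda>i. if i < g then e i else 0))"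
    by (intro sum.cong prod.cong) auto
  also have "\<dots> = (\<Sum>k\<in>box g M. \<Prod>m<g. h m (k m))"
    by (rule sum.reindex_bij_betw[OF box_bij])
  finally show ?thesis by simp
qed

lemma card_box: "card (box g M) = (M+1)^g"
proof -
  have "real (card (box g M)) = (\<Sum>k\<in>box g M. \<Prod>m<g. (\<lambda>_ _. 1::real) m (k m))" by simp
  also have "\<dots> = real ((M+1)^g)" by (subst box_sum) simp
  finally show ?thesis by (simp only: of_nat_eq_iff)
qed



lemma pow_le_fact_choose: "(i+1)^n \<le> fact n * ((i+n) choose n)"
proof (induction n)
  case 0 then show ?case by simp
next
  case (Suc n)
  have e: "Suc (i+n) * ((i+n) choose n) = (Suc (i+n) choose Suc n) * Suc n"
    by (rule Suc_times_binomial_eq)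
  have "(i+1)^Suc n = (i+1) * (i+1)^n" by simp
  also have "\<dots> \<le> Suc (i+n) * (fact n * ((i+n) choose n))"
    using Suc.IH by (intro mult_mono) auto
  also have "\<dots> = fact n * (Suc (i+n) * ((i+n) choose n))" by (rule mult.left_commute)
  also have "\<dots> = fact (Suc n) * ((i + Suc n) choose Suc n)"
    by (metis e fact_Suc mult.assoc mult.commute add_Suc_right of_nat_id)
  finally show ?case .
qed

lemma geom_id:
  fixes t :: real
  shows "(1-t) * (\<Sum>i\<le>M. t^i) + t^(M+1) = 1"
proof (induction M)
  case 0 then show ?case by simp
next
  case (Suc M)
  have "(1-t) * (\<Sum>i\<le>Suc M. t^i) + t^(Suc M+1) = (1-t) * (\<Sum>i\<le>M. t^i) + t^(M+1)"
    by (simp add: algebra_simps)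
  then show ?case using Suc.IH by simp
qed

lemma binom_id:
  fixes t :: real
  shows "(1-t) * (\<Sum>i\<le>M. real ((i+n+1) choose (n+1)) * t^i) + real ((M+n+1) choose (n+1)) * t^(M+1)
         = (\<Sum>i\<le>M. real ((i+n) choose n) * t^i)"
proof (induction M)
  case 0 then show ?case by (simp add: algebra_simps)
next
  case (Suc M)
  have p: "real ((Suc M+n+1) choose (n+1)) = real ((M+n+1) choose n) + real ((M+n+1) choose (n+1))"
    by (simp add: binomial_Suc_Suc)
  show ?case
    using Suc.IH
    by (simp add: p algebra_simps)
qed

lemma binom_series_bound:
  fixes t :: real
  assumes "0 \<le> t" "t < 1"
  shows "(\<Sum>i\<le>M. real ((i+n) choose n) * t^i) \<le> 1 / (1-t)^(n+1)"
proof (induction n)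
  case 0
  have "t^(M+1) \<ge> 0" using assms by simp
  then have "(1-t) * (\<Sum>i\<le>M. t^i) \<le> 1" using geom_id[of t M] by linarith
  then have "((1-t) * (\<Sum>i\<le>M. t^i)) / (1-t) \<le> 1 / (1-t)"
    using assms by (intro divide_right_mono) auto
  then show ?case using assms by simp
next
  case (Suc n)
  have "(1-t) * (\<Sum>i\<le>M. real ((i+n+1) choose (n+1)) * t^i) \<le> (\<Sum>i\<le>M. real ((i+n) choose n) * t^i)"
  proof -
    have "real ((M+n+1) choose (n+1)) * t^(M+1) \<ge> 0" using assms by simp
    then show ?thesis using binom_id[where t=t and M=M and n=n] by linarith
  qed
  also have "\<dots> \<le> 1 / (1-t)^(n+1)" by (rule Suc.IH)
  finally have "(1-t) * (\<Sum>i\<le>M. real ((i+n+1) choose (n+1)) * t^i) \<le> 1 / (1-t)^(n+1)" .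
  then have "((1-t) * (\<Sum>i\<le>M. real ((i+n+1) choose (n+1)) * t^i)) / (1-t) \<le> (1 / (1-t)^(n+1)) / (1-t)"
    using assms by (intro divide_right_mono) auto
  then show ?case using assms by (simp add: mult_ac)
qed

lemma pow_series_bound:
  fixes t :: real
  assumes "0 \<le> t" "t < 1"
  shows "(\<Sum>i\<le>M. real (i+1)^n * t^i) \<le> fact n / (1-t)^(n+1)"
proof -
  have "(\<Sum>i\<le>M. real (i+1)^n * t^i) \<le> (\<Sum>i\<le>M. fact n * (real ((i+n) choose n) * t^i))"
  proof (rule sum_mono)
    fix i
    have "real ((i+1)^n) \<le> real (fact n * ((i+n) choose n))"
      using pow_le_fact_choose by (simp only: of_nat_le_iff)
    then have "real (i+1)^n \<le> fact n * real ((i+n) choose n)" by simp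
    then show "real (i+1)^n * t^i \<le> fact n * (real ((i+n) choose n) * t^i)"
      using assms by (simp add: mult.assoc[symmetric] mult_right_mono)
  qed
  also have "\<dots> = fact n * (\<Sum>i\<le>M. real ((i+n) choose n) * t^i)" by (simp add: sum_distrib_left)
  also have "\<dots> \<le> fact n * (1 / (1-t)^(n+1))"
    by (intro mult_left_mono binom_series_bound assms) simp
  finally show ?thesis by simp
qed




lemma full_bound:
  fixes t :: real
  assumes "0 \<le> t" "t < 1" "finite F" "F \<subseteq> mindex g"
  shows "(\<Sum>j\<in>F. \<Prod>m<g. real (j m + 1)^(n m) * t^(j m)) \<le> (\<Prod>m<g. fact (n m) / (1-t)^(n m + 1))"
proof -
  define M where "M = (\<Sum>j\<in>F. \<Sum>m<g. j m)"
  have sub: "F \<subseteq> box g M"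
  proof
    fix j assume j: "j \<in> F"
    have "\<forall>m<g. j m \<le> M"
    proof (intro allI impI)
      fix m assume "m < g"
      then have "j m \<le> (\<Sum>m<g. j m)" by (intro member_le_sum) auto
      also have "\<dots> \<le> M" unfolding M_def using j assms(3) by (intro member_le_sum) auto
      finally show "j m \<le> M" .
    qed
    then show "j \<in> box g M" using j assms(4) by (auto simp: box_def)
  qed
  have "(\<Sum>j\<in>F. \<Prod>m<g. real (j m + 1)^(n m) * t^(j m)) \<le> (\<Sum>j\<in>box g M. \<Prod>m<g. real (j m + 1)^(n m) * t^(j m))"
    by (rule sum_mono2[OF finite_box sub]) (use assms in \<open>auto intro!: prod_nonneg\<close>)
  also have "\<dots> = (\<Prod>m<g. \<Sum>i\<le>M. real (i + 1)^(n m) * t^i)"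
    by (rule box_sum[where h = "\<lambda>m i. real (i + 1)^(n m) * t^i"])
  also have "\<dots> \<le> (\<Prod>m<g. fact (n m) / (1-t)^(n m + 1))"
  proof (rule prod_mono)
    fix m assume "m \<in> {..<g}"
    have "(\<Sum>i\<le>M. real (i + 1)^(n m) * t^i) \<le> fact (n m) / (1-t)^(n m + 1)"
      by (rule pow_series_bound[where M=M and n="n m", OF assms(1,2)])
    moreover have "0 \<le> (\<Sum>i\<le>M. real (i + 1)^(n m) * t^i)" using assms by (auto intro!: sum_nonneg)
    ultimately show "0 \<le> (\<Sum>i\<le>M. real (i + 1)^(n m) * t^i) \<and> (\<Sum>i\<le>M. real (i + 1)^(n m) * t^i) \<le> fact (n m) / (1-t)^(n m + 1)" by simp
  qed
  finally show ?thesis .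
qed

lemma exists_sub:
  assumes "k \<in> mindex g" "u \<le> (\<Sum>m<g. k m)"
  shows "\<exists>c\<in>mindex g. (\<forall>m. c m \<le> k m) \<and> (\<Sum>m<g. c m) = u"
  using assms(2)
proof (induction u)
  case 0
  show ?case by (rule bexI[where x = "\<lambda>_. 0"]) (auto simp: mindex_def)
next
  case (Suc u)
  then obtain c where c: "c \<in> mindex g" "\<forall>m. c m \<le> k m" "(\<Sum>m<g. c m) = u" by auto
  have "\<exists>m<g. c m < k m"
  proof (rule ccontr)
    assume "\<not> ?thesis"
    then have "\<forall>m<g. k m \<le> c m" by auto
    then have "(\<Sum>m<g. k m) \<le> (\<Sum>m<g. c m)" by (intro sum_mono) auto
    then show False using c Suc.prems by simp
  qed
  then obtain m0 where m0: "m0 < g" "c m0 < k m0" by auto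
  define c' where "c' = (\<lambda>i. c i + (if i = m0 then 1 else 0))"
  have "c' \<in> mindex g" using c m0 by (auto simp: c'_def mindex_def)
  moreover have "\<forall>m. c' m \<le> k m" using c m0 by (auto simp: c'_def Suc_le_eq)
  moreover have "(\<Sum>m<g. c' m) = Suc u"
    using c m0 by (simp add: c'_def sum.distrib)
  ultimately show ?case by blast
qed

lemma term_bound:
  fixes r t :: real and c k n :: "nat \<Rightarrow> nat"
  assumes "\<forall>m. c m \<le> k m" "(\<Sum>m<g. c m) = u" "0 \<le> r" "r \<le> t"
  shows "(\<Prod>m<g. real (k m + 1)^(n m)) * r^(\<Sum>m<g. k m)
     \<le> real (u+1)^(\<Sum>m<g. n m) * r^u * (\<Prod>m<g. real ((k m - c m) + 1)^(n m) * t^(k m - c m))"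
proof -
  define j where "j = (\<lambda>m. k m - c m)"
  have cu: "c m \<le> u" if "m < g" for m
  proof -
    have "c m \<le> (\<Sum>i<g. c i)" using that by (intro member_le_sum) auto
    then show ?thesis using assms(2) by simp
  qed
  have P1: "(\<Prod>m<g. real (k m + 1)^(n m)) \<le> (\<Prod>m<g. real (u+1)^(n m) * real (j m + 1)^(n m))"
  proof (rule prod_mono)
    fix m assume "m \<in> {..<g}"
    then have "c m \<le> u" using cu by auto
    moreover have "k m = c m + j m" using assms(1) by (simp add: j_def)
    moreover have "(u+1)*(j m+1) = u * j m + u + j m + 1" by (simp add: algebra_simps)
    ultimately have "k m + 1 \<le> (u+1) * (j m + 1)" by linarith
    then have "real (k m + 1) \<le> real (u+1) * real (j m + 1)"
      by (metis of_nat_le_iff of_nat_mult)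
    then have "real (k m + 1)^(n m) \<le> (real (u+1) * real (j m + 1))^(n m)"
      by (intro power_mono) auto
    then show "0 \<le> real (k m + 1)^(n m) \<and> real (k m + 1)^(n m) \<le> real (u+1)^(n m) * real (j m + 1)^(n m)"
      by (simp add: power_mult_distrib)
  qed
  have E1: "(\<Prod>m<g. real (u+1)^(n m) * real (j m + 1)^(n m)) = real (u+1)^(\<Sum>m<g. n m) * (\<Prod>m<g. real (j m + 1)^(n m))"
    by (simp add: prod.distrib power_sum)
  have sk: "(\<Sum>m<g. k m) = u + (\<Sum>m<g. j m)"
  proof -
    have "(\<Sum>m<g. k m) = (\<Sum>m<g. c m + j m)" using assms(1) by (intro sum.cong) (auto simp: j_def)
    then show ?thesis using assms(2) by (simp add: sum.distrib)
  qed
  have P2: "r^(\<Sum>m<g. k m) \<le> r^u * (\<Prod>m<g. t^(j m))"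
  proof -
    have "r^(\<Sum>m<g. j m) \<le> t^(\<Sum>m<g. j m)" using assms by (intro power_mono) auto
    then have "r^u * r^(\<Sum>m<g. j m) \<le> r^u * t^(\<Sum>m<g. j m)" using assms by (intro mult_left_mono) auto
    then show ?thesis by (simp add: sk power_add power_sum)
  qed
  have "(\<Prod>m<g. real (k m + 1)^(n m)) * r^(\<Sum>m<g. k m)
      \<le> (real (u+1)^(\<Sum>m<g. n m) * (\<Prod>m<g. real (j m + 1)^(n m))) * (r^u * (\<Prod>m<g. t^(j m)))"
  proof (rule mult_mono)
    show "(\<Prod>m<g. real (k m + 1)^(n m)) \<le> real (u+1)^(\<Sum>m<g. n m) * (\<Prod>m<g. real (j m + 1)^(n m))"
      using P1 E1 by simp
    show "r^(\<Sum>m<g. k m) \<le> r^u * (\<Prod>m<g. t^(j m))" by (rule P2)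
    show "0 \<le> real (u+1)^(\<Sum>m<g. n m) * (\<Prod>m<g. real (j m + 1)^(n m))"
      by (intro mult_nonneg_nonneg prod_nonneg) auto
    show "0 \<le> r^(\<Sum>m<g. k m)" using assms by simp
  qed
  also have "\<dots> = real (u+1)^(\<Sum>m<g. n m) * r^u * (\<Prod>m<g. real (j m + 1)^(n m) * t^(j m))"
    by (simp add: prod.distrib mult_ac)
  finally show ?thesis by (simp add: j_def)
qed




lemma tail_bound:
  fixes r t :: real and n :: "nat \<Rightarrow> nat"
  assumes "0 \<le> r" "r \<le> t" "t < 1" "finite F" "F \<subseteq> {k\<in>mindex g. u \<le> (\<Sum>m<g. k m)}"
  shows "(\<Sum>k\<in>F. (\<Prod>m<g. real (k m + 1)^(n m)) * r^(\<Sum>m<g. k m))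
     \<le> real (u+1)^g * (real (u+1)^(\<Sum>m<g. n m) * r^u * (\<Prod>m<g. fact (n m) / (1-t)^(n m + 1)))"
proof -
  define C where "C = {c\<in>mindex g. (\<Sum>m<g. c m) = u}"
  define D where "D = real (u+1)^(\<Sum>m<g. n m) * r^u"
  define K where "K = (\<Prod>m<g. fact (n m) / (1-t)^(n m + 1) :: real)"
  define b where "b = (\<lambda>j::nat\<Rightarrow>nat. \<Prod>m<g. real (j m + 1)^(n m) * t^(j m))"
  have Cbox: "C \<subseteq> box g u"
  proof
    fix c assume c: "c \<in> C"
    have "c m \<le> u" if "m < g" for m
    proof -
      have "c m \<le> (\<Sum>i<g. c i)" using that by (intro member_le_sum) auto
      then show ?thesis using c by (simp add: C_def)
    qed
    then show "c \<in> box g u" using c by (auto simp: box_def C_def)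
  qed
  have finC: "finite C" using finite_box Cbox finite_subset by blast
  have cardC: "card C \<le> (u+1)^g" using card_mono[OF finite_box Cbox] card_box by simp
  have bnn: "0 \<le> b j" for j using assms by (auto simp: b_def intro!: prod_nonneg)
  have Dnn: "0 \<le> D" using assms by (simp add: D_def)
  have Knn: "0 \<le> K" using assms by (auto simp: K_def intro!: prod_nonneg)
  have step: "(\<Prod>m<g. real (k m + 1)^(n m)) * r^(\<Sum>m<g. k m) \<le> (\<Sum>c\<in>{c\<in>C. \<forall>m. c m \<le> k m}. D * b (\<lambda>i. k i - c i))"
    if "k \<in> F" for k
  proof -
    from that assms(5) have "k \<in> mindex g" "u \<le> (\<Sum>m<g. k m)" by auto
    then obtain c0 where c0: "c0 \<in> mindex g" "\<forall>m. c0 m \<le> k m" "(\<Sum>m<g. c0 m) = u"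
      using exists_sub by blast
    have "(\<Prod>m<g. real (k m + 1)^(n m)) * r^(\<Sum>m<g. k m) \<le> D * b (\<lambda>i. k i - c0 i)"
      using term_bound[OF c0(2,3) assms(1,2), of n] by (simp add: D_def b_def)
    also have "\<dots> \<le> (\<Sum>c\<in>{c\<in>C. \<forall>m. c m \<le> k m}. D * b (\<lambda>i. k i - c i))"
    proof (rule member_le_sum)
      show "c0 \<in> {c\<in>C. \<forall>m. c m \<le> k m}" using c0 by (auto simp: C_def)
      show "finite {c\<in>C. \<forall>m. c m \<le> k m}" using finC by simp
    qed (use bnn Dnn in auto)
    finally show ?thesis .
  qed
  have "(\<Sum>k\<in>F. (\<Prod>m<g. real (k m + 1)^(n m)) * r^(\<Sum>m<g. k m))
      \<le> (\<Sum>k\<in>F. \<Sum>c\<in>{c\<in>C. \<forall>m. c m \<le> k m}. D * b (\<lambda>i. k i - c i))"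
    by (rule sum_mono) (rule step)
  also have "\<dots> = (\<Sum>c\<in>C. \<Sum>k\<in>{k\<in>F. \<forall>m. c m \<le> k m}. D * b (\<lambda>i. k i - c i))"
    by (rule sum.swap_restrict[OF assms(4) finC])
  also have "\<dots> \<le> (\<Sum>c\<in>C. D * K)"
  proof (rule sum_mono)
    fix c assume "c \<in> C"
    define S where "S = {k\<in>F. \<forall>m. c m \<le> k m}"
    have inj: "inj_on (\<lambda>k i. k i - c i) S"
    proof (rule inj_onI)
      fix k1 k2 assume "k1 \<in> S" "k2 \<in> S" "(\<lambda>i. k1 i - c i) = (\<lambda>i. k2 i - c i)"
      then have "\<forall>i. c i \<le> k1 i" "\<forall>i. c i \<le> k2 i" "\<forall>i. k1 i - c i = k2 i - c i"
        by (auto simp: S_def fun_eq_iff)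
      then show "k1 = k2" by (metis le_add_diff_inverse ext)
    qed
    have finS: "finite S" using assms(4) by (simp add: S_def)
    have subS: "(\<lambda>k i. k i - c i) ` S \<subseteq> mindex g"
      using assms(5) by (auto simp: S_def mindex_def)
    have "(\<Sum>k\<in>S. D * b (\<lambda>i. k i - c i)) = D * (\<Sum>j\<in>(\<lambda>k i. k i - c i) ` S. b j)"
      by (simp add: sum_distrib_left sum.reindex[OF inj])
    also have "\<dots> \<le> D * K"
      unfolding b_def K_def
      by (intro mult_left_mono full_bound Dnn) (use assms finS subS in auto)
    finally show "(\<Sum>k\<in>{k\<in>F. \<forall>m. c m \<le> k m}. D * b (\<lambda>i. k i - c i)) \<le> D * K"
      by (simp add: S_def)
  qed
  also have "\<dots> = real (card C) * (D * K)" by simp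
  also have "\<dots> \<le> real ((u+1)^g) * (D * K)"
  proof (rule mult_right_mono)
    show "real (card C) \<le> real ((u+1)^g)" using cardC by (simp only: of_nat_le_iff)
  qed (use Dnn Knn in auto)
  finally show ?thesis by (simp add: D_def K_def)
qed




lemma part1_bound:
  fixes g :: nat and f :: "(nat \<Rightarrow> nat) \<Rightarrow> complex" and A R :: real
    and n :: "nat \<Rightarrow> nat" and u :: nat and z :: "nat \<Rightarrow> complex"
  assumes g1: "g \<ge> 1" and om: "order_of_magnitude g f A n"
    and R: "0 < R" "R < 1" and z: "z \<in> polydisc g R"
  shows "norm (remainder_u g f u z)
     \<le> A * (real (u+1)^g * (real (u+1)^(\<Sum>m<g. n m) * supnorm_g g z ^ u * (\<Prod>m<g. fact (n m) / (1-R)^(n m + 1))))"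
proof -
  define r where "r = supnorm_g g z"
  have ne: "(\<lambda>m. norm (z m)) ` {..<g} \<noteq> {}"
  proof -
    have "0 \<in> {..<g}" using g1 by simp
    then show ?thesis by blast
  qed
  have zr: "norm (z m) \<le> r" if "m < g" for m
    unfolding r_def supnorm_g_def using that by (intro Max_ge) auto
  have r0: "0 \<le> r"
  proof -
    have "norm (z 0) \<le> r" using zr g1 by simp
    then show ?thesis by (rule order_trans[OF norm_ge_zero])
  qed
  have rR: "r < R"
  proof -
    have "r \<in> (\<lambda>m. norm (z m)) ` {..<g}" unfolding r_def supnorm_g_def by (rule Max_in) (use ne in auto)
    then show ?thesis using z by (auto simp: polydisc_def)
  qed
  have A1: "A \<ge> 1" and fb: "\<And>k. k \<in> mindex g \<Longrightarrow> norm (f k) \<le> A * (\<Prod>m<g. real (k m + 1) ^ n m)"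
    using om by (auto simp: order_of_magnitude_def)
  define \<phi> where "\<phi> = (\<lambda>k. f k * monom_g g k z)"
  define a where "a = (\<lambda>k::nat\<Rightarrow>nat. (\<Prod>m<g. real (k m + 1)^(n m)) * r^(\<Sum>m<g. k m))"
  define K where "K = (\<Prod>m<g. fact (n m) / (1-R)^(n m + 1) :: real)"
  define Bd where "Bd = (\<lambda>u::nat. A * (real (u+1)^g * (real (u+1)^(\<Sum>m<g. n m) * r ^ u * K)))"
  have nphi: "norm (\<phi> k) \<le> A * a k" if "k \<in> mindex g" for k
  proof -
    have "norm (monom_g g k z) = (\<Prod>m<g. norm (z m) ^ k m)"
      unfolding monom_g_def prod_norm[symmetric] by (simp add: norm_power)
    also have "\<dots> \<le> (\<Prod>m<g. r ^ k m)"
      by (rule prod_mono) (auto intro!: power_mono zr)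
    also have "\<dots> = r^(\<Sum>m<g. k m)" by (simp add: power_sum)
    finally have mo: "norm (monom_g g k z) \<le> r^(\<Sum>m<g. k m)" .
    have "norm (f k) * norm (monom_g g k z) \<le> (A * (\<Prod>m<g. real (k m + 1) ^ n m)) * r^(\<Sum>m<g. k m)"
    proof (rule mult_mono)
      show "0 \<le> A * (\<Prod>m<g. real (k m + 1) ^ n m)"
        using A1 by (intro mult_nonneg_nonneg prod_nonneg) auto
    qed (use fb[OF that] mo in auto)
    then show ?thesis by (simp add: \<phi>_def a_def norm_mult mult.assoc)
  qed
  have finsum: "(\<Sum>k\<in>F. norm (\<phi> k)) \<le> Bd v" if "finite F" "F \<subseteq> {k\<in>mindex g. v \<le> (\<Sum>m<g. k m)}" for F v
  proof -
    have "(\<Sum>k\<in>F. norm (\<phi> k)) \<le> (\<Sum>k\<in>F. A * a k)"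
      by (rule sum_mono) (use that nphi in auto)
    also have "\<dots> = A * (\<Sum>k\<in>F. a k)" by (simp add: sum_distrib_left)
    also have "\<dots> \<le> Bd v"
      unfolding Bd_def a_def K_def
      by (intro mult_left_mono tail_bound) (use that r0 rR R A1 in auto)
    finally show ?thesis .
  qed
  have abs_all: "(\<lambda>k. norm (\<phi> k)) summable_on mindex g"
  proof (rule nonneg_bdd_above_summable_on)
    show "bdd_above (sum (\<lambda>k. norm (\<phi> k)) ` {F. F \<subseteq> mindex g \<and> finite F})"
      by (rule bdd_aboveI[where M = "Bd 0"]) (use finsum[where v=0] in auto)
  qed auto
  have sum_all: "\<phi> summable_on mindex g" by (rule abs_summable_summable[OF abs_all])
  define S where "S = {k\<in>mindex g. (\<Sum>m<g. k m) < u}"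
  define T where "T = {k\<in>mindex g. u \<le> (\<Sum>m<g. k m)}"
  have finS: "finite S"
  proof (rule finite_subset[OF _ finite_box])
    show "S \<subseteq> box g u"
    proof
      fix k assume k: "k \<in> S"
      have "k m \<le> u" if "m < g" for m
      proof -
        have "k m \<le> (\<Sum>i<g. k i)" using that by (intro member_le_sum) auto
        then show ?thesis using k by (simp add: S_def)
      qed
      then show "k \<in> box g u" using k by (auto simp: S_def box_def)
    qed
  qed
  have un: "mindex g = S \<union> T" "S \<inter> T = {}" by (auto simp: S_def T_def)
  have "pseries g f z = infsum \<phi> (S \<union> T)" by (simp add: pseries_def \<phi>_def un(1)[symmetric])
  also have "\<dots> = infsum \<phi> S + infsum \<phi> T"
    by (rule infsum_Un_disjoint) (use sum_all un in \<open>auto intro: summable_on_subset_banach\<close>)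
  finally have rem: "remainder_u g f u z = infsum \<phi> T"
    using finS by (simp add: remainder_u_def S_def \<phi>_def)
  have absT: "(\<lambda>k. norm (\<phi> k)) summable_on T"
    by (rule summable_on_subset_banach[OF abs_all]) (auto simp: T_def)
  have "norm (remainder_u g f u z) \<le> infsum (\<lambda>k. norm (\<phi> k)) T"
    unfolding rem by (rule norm_infsum_bound[OF absT])
  also have "\<dots> \<le> Bd u"
    by (rule infsum_le_finite_sums[OF absT]) (rule finsum, auto simp: T_def)
  finally show ?thesis by (simp add: Bd_def K_def r_def)
qed




lemma ln_sq_le:
  fixes s :: real assumes "0 \<le> s" shows "ln (1 + s^2) \<le> s"
proof -
  have "(\<lambda>x. x - ln (1 + x^2)) 0 \<le> (\<lambda>x::real. x - ln (1 + x^2)) s"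
  proof (rule DERIV_nonneg_imp_nondecreasing[OF assms])
    fix x :: real assume "0 \<le> x" "x \<le> s"
    have pos: "0 < 1 + x^2" by (simp add: add_pos_nonneg)
    have d: "DERIV (\<lambda>x. x - ln (1 + x^2)) x :> 1 - (2*x) / (1 + x^2)"
      using pos by (auto intro!: derivative_eq_intros simp: field_simps power2_eq_square)
    have "2*x \<le> 1 + x^2" using sum_squares_ge_zero[of "x - 1" 0]
      by (simp add: power2_eq_square algebra_simps)
    then have "(2*x) / (1 + x^2) \<le> 1" using pos by (simp add: divide_le_eq)
    then show "\<exists>y. DERIV (\<lambda>x. x - ln (1 + x^2)) x :> y \<and> y \<ge> 0" using d by auto
  qed
  then show ?thesis by simp
qed

lemma ln_le_sqrt:
  fixes x :: real assumes "0 \<le> x" shows "ln (1 + x) \<le> sqrt x"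
  using ln_sq_le[of "sqrt x"] assms by simp




theorem mainTheorem15:
  fixes g :: nat and f :: "(nat \<Rightarrow> nat) \<Rightarrow> complex" and A R :: real
    and n :: "nat \<Rightarrow> nat" and u :: nat
  assumes "g \<ge> 1"
    and "order_of_magnitude g f A n"
    and "0 < R" and "R < 1"
  defines "nmax \<equiv> Max (n ` {..<g})"
    and "B \<equiv> 2 * real (\<Prod>m<g. fact (n m)) * A * real g
              / (1 - R) ^ (g + (\<Sum>m<g. n m))"
  shows "(\<forall>z\<in>polydisc g R.
            norm (remainder_u g f u z) \<le> B * real (u + 1) ^ ((nmax + 1) * g) * supnorm_g g z ^ u)
       \<and> (\<forall>\<kappa>::real. 0 < \<kappa> \<and> \<kappa> < 1 \<and>
            real u \<ge> max (16 * (real nmax * real g)^2 / (ln R)^2) (2 * (ln \<kappa> - ln B) / ln R)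
            \<longrightarrow> (\<forall>z\<in>polydisc g R. norm (remainder_u g f u z) \<le> \<kappa>))"
proof -
  note g1 = assms(1) and om = assms(2) and R = assms(3,4)
  define P where "P = (\<Sum>m<g. n m)"
  define PF where "PF = (\<Prod>m<g. fact (n m) :: nat)"
  define N where "N = (nmax + 1) * g"
  have A1: "A \<ge> 1" and n1: "\<And>m. m < g \<Longrightarrow> n m \<ge> 1" using om by (auto simp: order_of_magnitude_def)
  have nle: "n m \<le> nmax" if "m < g" for m unfolding nmax_def using that by (intro Max_ge) auto
  have nmax1: "nmax \<ge> 1" using nle[of 0] n1[of 0] g1 by simp
  have Ple: "P \<le> g * nmax"
    unfolding P_def using sum_bounded_above[of "{..<g}" n nmax] nle by simp
  have gP: "g + P \<le> N" using Ple by (simp add: N_def algebra_simps)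
  have "0 < PF" unfolding PF_def by (rule prod_pos) simp
  then have PFpos: "real PF > 0" by simp
  have K: "(\<Prod>m<g. fact (n m) / (1-R)^(n m + 1)) = real PF / (1-R)^(g+P)"
  proof -
    have "(\<Prod>m<g. fact (n m) / (1-R)^(n m + 1)) = (\<Prod>m<g. fact (n m) :: real) / (\<Prod>m<g. (1-R)^(n m + 1))"
      by (rule prod_dividef)
    also have "(\<Prod>m<g. (1-R)^(n m + 1)) = (1-R)^(g+P)"
    proof -
      have "(\<Prod>m<g. (1-R)^(n m + 1)) = (1-R)^(\<Sum>m<g. n m + 1)" by (rule power_sum[symmetric])
      also have "(\<Sum>m<g. n m + 1) = g + P" unfolding P_def sum.distrib by simp
      finally show ?thesis .
    qed
    also have "(\<Prod>m<g. fact (n m) :: real) = real PF" by (simp add: PF_def of_nat_prod)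
    finally show ?thesis .
  qed
  define Q where "Q = A * real PF / (1-R)^(g+P)"
  have Qpos: "Q > 0" using A1 PFpos R by (simp add: Q_def)
  have BQ: "B = 2 * real g * Q" by (simp add: B_def Q_def PF_def P_def)
  have Bpos: "B > 0" using BQ Qpos g1 by simp
  have part1: "norm (remainder_u g f u z) \<le> B * real (u + 1) ^ N * supnorm_g g z ^ u"
    if z: "z \<in> polydisc g R" for z
  proof -
    define r where "r = supnorm_g g z"
    have r0: "0 \<le> r"
    proof -
      have "norm (z 0) \<le> r" unfolding r_def supnorm_g_def using g1 by (intro Max_ge) auto
      then show ?thesis by (rule order_trans[OF norm_ge_zero])
    qed
    have "norm (remainder_u g f u z)
       \<le> A * (real (u+1)^g * (real (u+1)^P * r ^ u * (real PF / (1-R)^(g+P))))"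
      using part1_bound[OF g1 om R z, of u] by (simp only: K P_def r_def)
    also have "\<dots> = Q * (real (u+1)^(g+P) * r^u)" by (simp add: Q_def power_add)
    also have "\<dots> \<le> (2 * real g * Q) * (real (u+1)^N * r^u)"
    proof (rule mult_mono)
      show "Q \<le> 2 * real g * Q" using Qpos g1 by simp
      show "real (u+1)^(g+P) * r^u \<le> real (u+1)^N * r^u"
        using gP r0 by (intro mult_right_mono power_increasing) auto
    qed (use Qpos g1 r0 in auto)
    finally show ?thesis by (simp add: BQ r_def mult.assoc)
  qed
  have part2: "norm (remainder_u g f u z) \<le> \<kappa>"
    if k: "0 < \<kappa>" "\<kappa> < 1"
      and hu: "real u \<ge> max (16 * (real nmax * real g)^2 / (ln R)^2) (2 * (ln \<kappa> - ln B) / ln R)"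
      and z: "z \<in> polydisc g R" for \<kappa> z
  proof -
    define r where "r = supnorm_g g z"
    have ne: "(\<lambda>m. norm (z m)) ` {..<g} \<noteq> {}"
    proof -
      have "0 \<in> {..<g}" using g1 by simp
      then show ?thesis by blast
    qed
    have r0: "0 \<le> r"
    proof -
      have "norm (z 0) \<le> r" unfolding r_def supnorm_g_def using g1 by (intro Max_ge) auto
      then show ?thesis by (rule order_trans[OF norm_ge_zero])
    qed
    have rR: "r < R"
    proof -
      have "r \<in> (\<lambda>m. norm (z m)) ` {..<g}" unfolding r_def supnorm_g_def by (rule Max_in) (use ne in auto)
      then show ?thesis using z by (auto simp: polydisc_def)
    qed
    define L where "L = - ln R"
    have L0: "L > 0" using R by (simp add: L_def)
    have lnR: "ln R < 0" using L0 by (simp add: L_def)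
    have h1: "real u * ln R \<le> 2 * (ln \<kappa> - ln B)"
    proof -
      have "2 * (ln \<kappa> - ln B) / ln R \<le> real u" using hu by simp
      then show ?thesis using lnR by (simp add: neg_divide_le_eq mult.commute)
    qed
    define Pg where "Pg = real nmax * real g"
    have "1 \<le> nmax * g" using nmax1 g1 by (simp add: Suc_le_eq)
    then have Pg1: "Pg \<ge> 1" unfolding Pg_def by (metis of_nat_1 of_nat_le_iff of_nat_mult)
    have h2: "16 * Pg^2 \<le> real u * L^2"
    proof -
      have "16 * Pg^2 / L^2 \<le> real u" using hu by (simp add: Pg_def L_def)
      then show ?thesis using L0 by (simp add: divide_le_eq)
    qed
    have h3: "4 * Pg \<le> sqrt (real u) * L"
    proof -
      have "sqrt (16 * Pg^2) \<le> sqrt (real u * L^2)" using h2 by (rule real_sqrt_le_mono)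
      moreover have "sqrt (16 * Pg^2) = 4 * Pg" using Pg1 by (simp add: real_sqrt_mult)
      moreover have "sqrt (real u * L^2) = sqrt (real u) * L" using L0 by (simp add: real_sqrt_mult)
      ultimately show ?thesis by simp
    qed
    have lnu: "ln (1 + real u) \<le> sqrt (real u)" by (rule ln_le_sqrt) simp
    have lnu0: "0 \<le> ln (1 + real u)" by simp
    have "g \<le> nmax * g" using nmax1 by simp
    then have "N \<le> 2 * (nmax * g)" by (simp add: N_def algebra_simps)
    then have NP: "real N \<le> 2 * Pg" unfolding Pg_def by (metis of_nat_le_iff of_nat_mult of_nat_numeral)
    have h4: "real N * ln (1 + real u) \<le> real u * L / 2"
    proof -
      have "real N * ln (1 + real u) \<le> (2 * Pg) * sqrt (real u)"
        using NP lnu lnu0 Pg1 by (intro mult_mono) auto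
      also have "\<dots> \<le> (sqrt (real u) * L / 2) * sqrt (real u)"
        using h3 by (intro mult_right_mono) auto
      also have "\<dots> = real u * L / 2" by (simp add: power2_eq_square[symmetric])
      finally show ?thesis .
    qed
    have "norm (remainder_u g f u z) \<le> B * real (u + 1) ^ N * r ^ u" using part1[OF z] by (simp add: r_def)
    also have "\<dots> \<le> B * real (u + 1) ^ N * R ^ u"
      using Bpos r0 rR by (intro mult_left_mono power_mono) auto
    also have "\<dots> \<le> \<kappa>"
    proof -
      have pos: "0 < B * real (u + 1) ^ N * R ^ u" using Bpos R by simp
      have "ln (B * real (u + 1) ^ N * R ^ u) = ln B + real N * ln (1 + real u) + real u * ln R"
        using Bpos R by (simp add: ln_mult ln_realpow add.commute)
      also have "\<dots> \<le> ln \<kappa>" using h1 h4 by (simp add: L_def)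
      finally show ?thesis using pos k by simp
    qed
    finally show ?thesis .
  qed
  show ?thesis using part1 part2 by (auto simp: N_def)
qed


end
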